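(* Fix $n\in\mathbb N$ and suppose that for all origin-symmetric convex sets $K,L\subseteq\mathbb R^n$ and all $\lambda\in(0,1)$ one has $\gamma_n(K^\lambda L^{1-\lambda})\ge\gamma_n(K)^\lambda\gamma_n(L)^{1-\lambda}$. Then for every origin-symmetric convex sets $K,L\subseteq\mathbb R^n$ and every $\lambda\in(0,1)$, $$\Psi_n^{-1}\big(\gamma_n\big(\lambda K+(1-\lambda)L\big)\big) \geq \sup_{p\in(0,1)} \Big(\frac{\lambda}{p}\Big)^p \Big(\frac{1-\lambda}{1-p}\Big)^{1-p}\, \Psi_n^{-1}\big(\gamma_n(K)^p\, \gamma_n(L)^{1-p}\big).$$
   Context: $\gamma_n$ is the standard Gaussian measure on $\mathbb R^n$ with density $(2\pi)^{-n/2}e^{-|x|^2/2}$. $\Psi_n:[0,\infty)\to[0,1)$ is $\Psi_n(r)=\gamma_n(\{x:|x|\le r\})$, extended by $\Psi_n(\infty)=1$, and $\Psi_n^{-1}$ is its inverse. For symmetric convex $K,L$ with support functions $h_K(\theta)=\sup_{y\in K}\langle y,\theta\rangle$, the $\lambda$-geometric mean is $K^\lambda L^{1-\lambda}=\bigcap_{\theta\in\mathbb S^{n-1}}\{x\in\mathbb R^n:\langle x,\theta\rangle\le h_K(\theta)^\lambda h_L(\theta)^{1-\lambda}\}$. A set is symmetric if $K=-K$; $\lambda K+(1-\lambda)L=\{\lambda a+(1-\lambda)b: a\in K, b\in L\}$. *)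

theory Defs
  imports "HOL-Analysis.Analysis"
begin

text \<open>Standard Gaussian density and measure on R^n, n = CARD('n).\<close>
definition gauss_dens :: "real^'n \<Rightarrow> real" where
  "gauss_dens x = (2 * pi) powr (- real CARD('n) / 2) * exp (- (norm x)\<^sup>2 / 2)"

definition gauss :: "(real^'n) set \<Rightarrow> real" where
  "gauss A = measure (density lebesgue (\<lambda>x. ennreal (gauss_dens x))) A"

text \<open>Psi_n(r) = gamma_n(closed ball of radius r), and its inverse (extended by Psi_n(infinity) = 1).\<close>
definition Psi :: "'n::finite itself \<Rightarrow> real \<Rightarrow> real" where
  "Psi _ r = gauss (cball (0::real^'n) r)"

definition Psi_inv :: "'n::finite itself \<Rightarrow> real \<Rightarrow> ereal" where
  "Psi_inv N t = (if t \<ge> 1 then \<infinity> else ereal (THE r. r \<ge> 0 \<and> Psi N r = t))"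

definition symmetric_set :: "(real^'n) set \<Rightarrow> bool" where
  "symmetric_set K \<longleftrightarrow> uminus ` K = K"

text \<open>Support function, with values in the extended reals.\<close>
definition supp_fun :: "(real^'n) set \<Rightarrow> real^'n \<Rightarrow> ereal" where
  "supp_fun K \<theta> = (SUP y\<in>K. ereal (y \<bullet> \<theta>))"

text \<open>Power on extended reals: infinity^t = infinity.\<close>
definition epow :: "ereal \<Rightarrow> real \<Rightarrow> ereal" where
  "epow x t = (if x = \<infinity> then \<infinity> else if x = -\<infinity> then -\<infinity> else ereal (real_of_ereal x powr t))"

definition geom_mean :: "(real^'n) set \<Rightarrow> (real^'n) set \<Rightarrow> real \<Rightarrow> (real^'n) set" where
  "geom_mean K L lam = (\<Inter>\<theta>\<in>sphere 0 1.
      {x. ereal (x \<bullet> \<theta>) \<le> epow (supp_fun K \<theta>) lam * epow (supp_fun L \<theta>) (1 - lam)})"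

definition minkowski_comb :: "real \<Rightarrow> (real^'n) set \<Rightarrow> (real^'n) set \<Rightarrow> (real^'n) set" where
  "minkowski_comb lam K L = {lam *\<^sub>R a + (1 - lam) *\<^sub>R b | a b. a \<in> K \<and> b \<in> L}"

end

theory Submission
  imports Defs "HOL-Probability.Probability"
begin


abbreviation GM :: "(real^'n) measure" where
  "GM \<equiv> density lebesgue (\<lambda>x. ennreal (gauss_dens x))"

lemma gauss_dens_pos: "gauss_dens x > 0"
  by (simp add: gauss_dens_def)

lemma gauss_dens_cont: "continuous_on UNIV (gauss_dens :: real^'n \<Rightarrow> real)"
  unfolding gauss_dens_def[abs_def] by (intro continuous_intros) auto

lemma gauss_dens_borel[measurable]: "(gauss_dens :: real^'n \<Rightarrow> real) \<in> borel_measurable borel"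
  using gauss_dens_cont borel_measurable_continuous_onI by blast

lemma gauss_dens_leb[measurable]: "(gauss_dens :: real^'n \<Rightarrow> real) \<in> borel_measurable lebesgue"
  using gauss_dens_borel by (simp add: measurable_completion measurable_lborel1 flip: measurable_lborel1)

lemma norm_sq_basis: "(norm (x::'a::euclidean_space))\<^sup>2 = (\<Sum>b\<in>Basis. (x \<bullet> b)\<^sup>2)"
proof -
  have "(norm x)\<^sup>2 = x \<bullet> x" by (rule power2_norm_eq_inner)
  also have "\<dots> = (\<Sum>b\<in>Basis. (x \<bullet> b) * (x \<bullet> b))" by (rule euclidean_inner)
  finally show ?thesis by (simp add: power2_eq_square)
qed

lemma gauss_dens_prod: "gauss_dens (x::real^'n) = (\<Prod>b\<in>Basis. std_normal_density (x \<bullet> b))"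
proof -
  have "(\<Prod>b\<in>Basis. std_normal_density (x \<bullet> b)) =
     (\<Prod>b\<in>(Basis::(real^'n) set). 1 / sqrt (2*pi)) * (\<Prod>b\<in>Basis. exp (- (x \<bullet> b)\<^sup>2 / 2))"
    unfolding std_normal_density_def prod.distrib[symmetric] by simp
  also have "(\<Prod>b\<in>Basis. exp (- (x \<bullet> b)\<^sup>2 / 2)) = exp (\<Sum>b\<in>Basis. - (x \<bullet> b)\<^sup>2 / 2)"
    by (simp add: exp_sum)
  also have "(\<Sum>b\<in>Basis. - (x \<bullet> b)\<^sup>2 / 2) = - (norm x)\<^sup>2 / 2"
    by (simp add: norm_sq_basis sum_divide_distrib sum_negf)
  also have "(\<Prod>b\<in>(Basis::(real^'n) set). 1 / sqrt (2*pi)) = (2 * pi) powr (- real CARD('n) / 2)"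
  proof -
    have "(\<Prod>b\<in>(Basis::(real^'n) set). 1 / sqrt (2*pi)) = (1 / sqrt (2*pi)) ^ CARD('n)"
      by simp
    also have "\<dots> = ((2*pi) powr (-1/2)) ^ CARD('n)"
      by (simp add: powr_minus_divide sqrt_def root_powr_inverse powr_half_sqrt[symmetric])
    also have "\<dots> = (2 * pi) powr (- real CARD('n) / 2)"
      by (simp add: powr_realpow[symmetric] powr_powr flip: powr_power)
    finally show ?thesis .
  qed
  finally show ?thesis by (simp add: gauss_dens_def)
qed

lemma GM_UNIV: "emeasure (GM :: (real^'n) measure) UNIV = 1"
proof -
  have "emeasure (GM :: (real^'n) measure) UNIV = (\<integral>\<^sup>+x. ennreal (gauss_dens (x::real^'n)) \<partial>lebesgue)"
    by (subst emeasure_density) auto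
  also have "\<dots> = (\<integral>\<^sup>+x. ennreal (gauss_dens (x::real^'n)) \<partial>lborel)"
    by (simp add: nn_integral_completion)
  also have "\<dots> = (\<integral>\<^sup>+x. (\<Prod>b\<in>Basis. ennreal (std_normal_density ((x::real^'n) \<bullet> b))) \<partial>lborel)"
    by (simp add: gauss_dens_prod prod_ennreal)
  also have "\<dots> = (\<Prod>b\<in>(Basis::(real^'n) set). (\<integral>\<^sup>+x. ennreal (std_normal_density x) \<partial>lborel))"
    by (rule nn_integral_lborel_prod) auto
  also have "(\<integral>\<^sup>+x. ennreal (std_normal_density x) \<partial>lborel) = 1"
    by (subst nn_integral_eq_integral) auto
  finally show ?thesis by simp
qed

lemma GM_prob: "prob_space (GM :: (real^'n) measure)"
  by (rule prob_spaceI) (simp add: GM_UNIV)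

lemma sets_GM[simp, measurable_cong]: "sets (GM :: (real^'n) measure) = sets lebesgue"
  by simp

lemma space_GM[simp]: "space (GM :: (real^'n) measure) = UNIV"
  by simp

lemma gauss_eq: "gauss A = measure GM A"
  by (simp add: gauss_def)

lemma gauss_nonneg: "gauss A \<ge> 0"
  by (simp add: gauss_def)

lemma gauss_le1: "gauss (A :: (real^'n) set) \<le> 1"
  using prob_space.prob_le_1[OF GM_prob] by (simp add: gauss_def)

lemma gauss_mono: "A \<subseteq> B \<Longrightarrow> B \<in> sets lebesgue \<Longrightarrow> gauss (A :: (real^'n) set) \<le> gauss B"
proof -
  interpret prob_space "GM :: (real^'n) measure" by (rule GM_prob)
  assume "A \<subseteq> B" "B \<in> sets lebesgue"
  then show ?thesis using finite_measure_mono[of A B] by (simp add: gauss_def)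
qed

lemma emeasure_GM_eq: "emeasure (GM :: (real^'n) measure) A = ennreal (gauss A)"
proof -
  interpret prob_space "GM :: (real^'n) measure" by (rule GM_prob)
  show ?thesis using emeasure_eq_measure[of A] by (simp add: gauss_def)
qed

lemma GM_null: "N \<in> null_sets lebesgue \<Longrightarrow> N \<in> null_sets (GM :: (real^'n) measure)"
proof -
  assume N: "N \<in> null_sets lebesgue"
  have "AE x in lebesgue. x \<notin> N" using AE_not_in[OF N] .
  then have "AE x in lebesgue. x \<in> N \<longrightarrow> ennreal (gauss_dens x) = 0" by eventually_elim auto
  moreover have "(\<lambda>x. ennreal (gauss_dens (x::real^'n))) \<in> borel_measurable lebesgue" by simp
  ultimately show ?thesis using N null_sets_density_iff[of "\<lambda>x. ennreal (gauss_dens x)" lebesgue N] by auto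
qed

lemma gauss_null: "N \<in> null_sets lebesgue \<Longrightarrow> gauss (N :: (real^'n) set) = 0"
  using GM_null[of N] by (simp add: gauss_def measure_def null_setsD1)

lemma scale_image_eq: "c \<noteq> 0 \<Longrightarrow> (\<lambda>x. c *\<^sub>R x) ` A = (\<lambda>x. (1/c) *\<^sub>R (x::'a::real_vector)) -` A"
proof (intro equalityI subsetI)
  fix y assume c: "c \<noteq> 0" and "y \<in> (\<lambda>x. c *\<^sub>R x) ` A"
  then obtain x where "x \<in> A" "y = c *\<^sub>R x" by auto
  then show "y \<in> (\<lambda>x. (1/c) *\<^sub>R x) -` A" using c by simp
next
  fix y assume c: "c \<noteq> 0" and "y \<in> (\<lambda>x. (1/c) *\<^sub>R x) -` A"
  then have "(1/c) *\<^sub>R y \<in> A" "y = c *\<^sub>R ((1/c) *\<^sub>R y)" by auto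
  then show "y \<in> (\<lambda>x. c *\<^sub>R x) ` A" by blast
qed

lemma scale_image_sets: "c \<noteq> 0 \<Longrightarrow> A \<in> sets lebesgue \<Longrightarrow> (\<lambda>x. c *\<^sub>R x) ` A \<in> sets (lebesgue :: 'a::euclidean_space measure)"
  using measurable_sets[OF lebesgue_measurable_scaling[of "1/c"], of A]
  by (simp add: scale_image_eq)

lemma nn_integral_scale_lebesgue:
  fixes f :: "'a::euclidean_space \<Rightarrow> ennreal"
  assumes f[measurable]: "f \<in> borel_measurable lebesgue" and c: "c \<noteq> 0"
  shows "(\<integral>\<^sup>+x. f x \<partial>lebesgue) = ennreal (\<bar>c\<bar> ^ DIM('a)) * (\<integral>\<^sup>+x. f (c *\<^sub>R x) \<partial>lebesgue)"
proof -
  have T: "(\<lambda>x::'a. 0 + (\<Sum>j\<in>Basis. (c * (x \<bullet> j)) *\<^sub>R j)) = (\<lambda>x. c *\<^sub>R x)"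
    unfolding scaleR_scaleR[symmetric] scaleR_sum_right[symmetric] euclidean_representation by simp
  have leb: "lebesgue = density (distr lebesgue lebesgue (\<lambda>x::'a. c *\<^sub>R x)) (\<lambda>_. ennreal (\<bar>c\<bar> ^ DIM('a)))"
    using lebesgue_affine_euclidean[where c="\<lambda>_::'a. c" and t=0] c unfolding T prod_constant by simp
  have meas: "(\<lambda>x::'a. c *\<^sub>R x) \<in> lebesgue \<rightarrow>\<^sub>M lebesgue"
    by (rule lebesgue_measurable_scaling)
  have fd: "f \<in> borel_measurable (distr lebesgue lebesgue (\<lambda>x::'a. c *\<^sub>R x))"
  proof -
    have "measurable (distr lebesgue lebesgue (\<lambda>x::'a. c *\<^sub>R x)) (borel :: ennreal measure) = measurable lebesgue borel"
      by (rule measurable_cong_sets) auto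
    then show ?thesis using f by simp
  qed
  have "(\<integral>\<^sup>+x. f x \<partial>lebesgue) = (\<integral>\<^sup>+x. f x \<partial>density (distr lebesgue lebesgue (\<lambda>x::'a. c *\<^sub>R x)) (\<lambda>_. ennreal (\<bar>c\<bar> ^ DIM('a))))"
    using leb by simp
  also have "\<dots> = \<integral>\<^sup>+ x. ennreal (\<bar>c\<bar> ^ DIM('a)) * f x \<partial>distr lebesgue lebesgue (\<lambda>x. c *\<^sub>R x)"
    by (rule nn_integral_density) (simp_all add: fd)
  also have "\<dots> = ennreal (\<bar>c\<bar> ^ DIM('a)) * integral\<^sup>N (distr lebesgue lebesgue (\<lambda>x. c *\<^sub>R x)) f"
    by (rule nn_integral_cmult) (rule fd)
  also have "integral\<^sup>N (distr lebesgue lebesgue (\<lambda>x. c *\<^sub>R x)) f = (\<integral>\<^sup>+x. f (c *\<^sub>R x) \<partial>lebesgue)"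
    by (rule nn_integral_distr[OF meas]) simp
  finally show ?thesis .
qed


lemma GM_scale:
  fixes A :: "(real^'n) set"
  assumes A[measurable]: "A \<in> sets lebesgue" and c: "c > 0"
  shows "emeasure GM ((\<lambda>x. c *\<^sub>R x) ` A) = (\<integral>\<^sup>+x. ennreal (c ^ CARD('n) * gauss_dens (c *\<^sub>R x)) * indicator A x \<partial>lebesgue)"
proof -
  have cA[measurable]: "(\<lambda>x. c *\<^sub>R x) ` A \<in> sets lebesgue" using scale_image_sets[of c A] c by simp
  have ind: "indicator ((\<lambda>x. c *\<^sub>R x) ` A) (c *\<^sub>R x) = (indicator A x :: ennreal)" for x
    using c by (auto simp: indicator_def image_iff)
  have m1: "(\<lambda>x. ennreal (gauss_dens x) * indicator ((\<lambda>x. c *\<^sub>R x) ` A) x) \<in> borel_measurable (lebesgue :: (real^'n) measure)"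
    by simp
  have m2: "(\<lambda>x. ennreal (gauss_dens (c *\<^sub>R x)) * indicator A x) \<in> borel_measurable (lebesgue :: (real^'n) measure)"
  proof -
    have "(\<lambda>x. gauss_dens (c *\<^sub>R (x::real^'n))) \<in> borel_measurable lebesgue"
      using measurable_compose[OF lebesgue_measurable_scaling[of c] gauss_dens_leb] by (simp add: comp_def)
    then show ?thesis by simp
  qed
  have "emeasure GM ((\<lambda>x. c *\<^sub>R x) ` A) = (\<integral>\<^sup>+x. ennreal (gauss_dens x) * indicator ((\<lambda>x. c *\<^sub>R x) ` A) x \<partial>lebesgue)"
    by (subst emeasure_density) auto
  also have "\<dots> = ennreal (\<bar>c\<bar> ^ DIM(real^'n)) * (\<integral>\<^sup>+x. ennreal (gauss_dens (c *\<^sub>R x)) * indicator ((\<lambda>x. c *\<^sub>R x) ` A) (c *\<^sub>R x) \<partial>lebesgue)"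
    using c by (subst nn_integral_scale_lebesgue[OF m1, of c]) auto
  also have "\<dots> = ennreal (c ^ CARD('n)) * (\<integral>\<^sup>+x. ennreal (gauss_dens (c *\<^sub>R x)) * indicator A x \<partial>lebesgue)"
    using c unfolding ind by simp
  also have "\<dots> = (\<integral>\<^sup>+x. ennreal (c ^ CARD('n)) * (ennreal (gauss_dens (c *\<^sub>R x)) * indicator A x) \<partial>lebesgue)"
    by (rule nn_integral_cmult[symmetric, OF m2])
  also have "\<dots> = (\<integral>\<^sup>+x. ennreal (c ^ CARD('n) * gauss_dens (c *\<^sub>R x)) * indicator A x \<partial>lebesgue)"
  proof (rule nn_integral_cong)
    fix x :: "real^'n"
    have "ennreal (c ^ CARD('n) * gauss_dens (c *\<^sub>R x)) = ennreal (c ^ CARD('n)) * ennreal (gauss_dens (c *\<^sub>R x))"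
      using c gauss_dens_pos[of "c *\<^sub>R x"] by (intro ennreal_mult) auto
    then show "ennreal (c ^ CARD('n)) * (ennreal (gauss_dens (c *\<^sub>R x)) * indicator A x) = ennreal (c ^ CARD('n) * gauss_dens (c *\<^sub>R x)) * indicator A x"
      by (simp add: mult.assoc)
  qed
  finally show ?thesis .
qed

lemma scale_cball: "t > 0 \<Longrightarrow> (\<lambda>x. t *\<^sub>R x) ` cball 0 r = cball (0::'a::real_normed_vector) (t * r)"
proof (intro equalityI subsetI)
  fix y :: 'a assume t: "t > 0" and "y \<in> (\<lambda>x. t *\<^sub>R x) ` cball 0 r"
  then obtain x where "norm x \<le> r" "y = t *\<^sub>R x" by auto
  then show "y \<in> cball 0 (t * r)" using t by (auto simp: mult_left_mono)
next
  fix y assume t: "t > 0" and y: "y \<in> cball (0::'a) (t * r)"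
  have "norm ((1/t) *\<^sub>R y) = norm y / t" using t by simp
  also have "\<dots> \<le> r" using y t by (simp add: divide_le_eq mult.commute)
  finally have "(1/t) *\<^sub>R y \<in> cball 0 r" by simp
  moreover have "y = t *\<^sub>R ((1/t) *\<^sub>R y)" using t by simp
  ultimately show "y \<in> (\<lambda>x. t *\<^sub>R x) ` cball 0 r" by blast
qed

lemma dens_scale:
  assumes t: "t > 0"
  shows "t ^ CARD('n) * gauss_dens (t *\<^sub>R (x::real^'n)) = gauss_dens x * (t ^ CARD('n) * exp ((1 - t\<^sup>2) * (norm x)\<^sup>2 / 2))"
proof -
  have "- (norm (t *\<^sub>R x))\<^sup>2 / 2 = - (norm x)\<^sup>2 / 2 + (1 - t\<^sup>2) * (norm x)\<^sup>2 / 2"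
    using t by (simp add: power_mult_distrib algebra_simps)
  then have e: "exp (- (norm (t *\<^sub>R x))\<^sup>2 / 2) = exp (- (norm x)\<^sup>2 / 2) * exp ((1 - t\<^sup>2) * (norm x)\<^sup>2 / 2)"
    by (simp add: exp_add[symmetric])
  show ?thesis unfolding gauss_dens_def e by (simp add: mult_ac)
qed

lemma dilation:
  fixes A :: "(real^'n) set"
  assumes A[measurable]: "A \<in> sets lebesgue" and t: "0 < t" "t \<le> 1" and r: "0 \<le> r"
    and le: "gauss (cball (0::real^'n) r) \<le> gauss A"
  shows "gauss (cball (0::real^'n) (t*r)) \<le> gauss ((\<lambda>x. t *\<^sub>R x) ` A)"
proof -
  define w where "w x = t ^ CARD('n) * exp ((1 - t\<^sup>2) * (norm (x::real^'n))\<^sup>2 / 2)" for x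
  define w0 where "w0 = t ^ CARD('n) * exp ((1 - t\<^sup>2) * r\<^sup>2 / 2)"
  define B where "B = cball (0::real^'n) r"
  have B[measurable]: "B \<in> sets lebesgue" unfolding B_def by simp
  have w_meas[measurable]: "w \<in> borel_measurable lebesgue"
  proof -
    have "continuous_on UNIV w" unfolding w_def[abs_def] by (intro continuous_intros) auto
    then have "w \<in> borel_measurable borel" using borel_measurable_continuous_onI by blast
    then show ?thesis by (simp add: measurable_completion measurable_lborel1 flip: measurable_lborel1)
  qed
  have t2: "0 \<le> 1 - t\<^sup>2" using t by (simp add: power_le_one)
  have wB: "w x \<le> w0" if "x \<in> B" for x
  proof -
    have "(norm x)\<^sup>2 \<le> r\<^sup>2" using that r unfolding B_def by (intro power_mono) auto
    then have "(1 - t\<^sup>2) * (norm x)\<^sup>2 / 2 \<le> (1 - t\<^sup>2) * r\<^sup>2 / 2"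
      using t2 by (intro divide_right_mono mult_left_mono) auto
    then show ?thesis unfolding w_def w0_def using t by (intro mult_left_mono) auto
  qed
  have wnB: "w0 \<le> w x" if "x \<notin> B" for x
  proof -
    have "r\<^sup>2 \<le> (norm x)\<^sup>2" using that r unfolding B_def by (intro power_mono) auto
    then have "(1 - t\<^sup>2) * r\<^sup>2 / 2 \<le> (1 - t\<^sup>2) * (norm x)\<^sup>2 / 2"
      using t2 by (intro divide_right_mono mult_left_mono) auto
    then show ?thesis unfolding w_def w0_def using t by (intro mult_left_mono) auto
  qed
  have w_nonneg: "0 \<le> w x" for x unfolding w_def using t by simp
  define F where "F S = (\<integral>\<^sup>+x. ennreal (gauss_dens x) * ennreal (w x) * indicator S x \<partial>lebesgue)" for S
  have F_eq: "emeasure GM ((\<lambda>x. t *\<^sub>R x) ` S) = F S" if S: "S \<in> sets lebesgue" for S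
    unfolding GM_scale[OF S t(1)] F_def
  proof (rule nn_integral_cong)
    fix x :: "real^'n"
    show "ennreal (t ^ CARD('n) * gauss_dens (t *\<^sub>R x)) * indicator S x = ennreal (gauss_dens x) * ennreal (w x) * indicator S x"
      unfolding dens_scale[OF t(1)] w_def[symmetric]
      using gauss_dens_pos[of x] w_nonneg[of x] by (simp add: ennreal_mult)
  qed
  have F_split: "F S = F (S \<inter> T) + F (S - T)" if "S \<in> sets lebesgue" "T \<in> sets lebesgue" for S T
  proof -
    have "F S = (\<integral>\<^sup>+x. ennreal (gauss_dens x) * ennreal (w x) * indicator (S \<inter> T) x + ennreal (gauss_dens x) * ennreal (w x) * indicator (S - T) x \<partial>lebesgue)"
      unfolding F_def by (rule nn_integral_cong) (auto simp: indicator_def)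
    also have "\<dots> = F (S \<inter> T) + F (S - T)"
      unfolding F_def using that by (intro nn_integral_add) auto
    finally show ?thesis .
  qed
  have GM_eq: "emeasure GM S = (\<integral>\<^sup>+x. ennreal (gauss_dens x) * indicator S x \<partial>lebesgue)" if "S \<in> sets lebesgue" for S
    using that by (subst emeasure_density) auto
  have F_ge: "ennreal w0 * emeasure GM (A - B) \<le> F (A - B)"
  proof -
    have "ennreal w0 * emeasure GM (A - B) = (\<integral>\<^sup>+x. ennreal w0 * (ennreal (gauss_dens x) * indicator (A - B) x) \<partial>lebesgue)"
      unfolding GM_eq[of "A - B", OF sets.Diff[OF A B]] by (rule nn_integral_cmult[symmetric]) auto
    also have "\<dots> \<le> F (A - B)"
      unfolding F_def
    proof (rule nn_integral_mono)
      fix x :: "real^'n"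
      show "ennreal w0 * (ennreal (gauss_dens x) * indicator (A - B) x) \<le> ennreal (gauss_dens x) * ennreal (w x) * indicator (A - B) x"
      proof (cases "x \<in> A - B")
        case True
        then have "ennreal w0 \<le> ennreal (w x)" using wnB[of x] by (auto intro: ennreal_leI)
        then have "ennreal (gauss_dens x) * ennreal w0 \<le> ennreal (gauss_dens x) * ennreal (w x)"
          by (rule mult_left_mono) simp
        then show ?thesis using True by (simp add: mult_ac)
      qed simp
    qed
    finally show ?thesis .
  qed
  have F_le: "F (B - A) \<le> ennreal w0 * emeasure GM (B - A)"
  proof -
    have "F (B - A) \<le> (\<integral>\<^sup>+x. ennreal w0 * (ennreal (gauss_dens x) * indicator (B - A) x) \<partial>lebesgue)"
      unfolding F_def
    proof (rule nn_integral_mono)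
      fix x :: "real^'n"
      show "ennreal (gauss_dens x) * ennreal (w x) * indicator (B - A) x \<le> ennreal w0 * (ennreal (gauss_dens x) * indicator (B - A) x)"
      proof (cases "x \<in> B - A")
        case True
        then have "ennreal (w x) \<le> ennreal w0" using wB[of x] by (auto intro: ennreal_leI)
        then have "ennreal (gauss_dens x) * ennreal (w x) \<le> ennreal (gauss_dens x) * ennreal w0"
          by (rule mult_left_mono) simp
        then show ?thesis using True by (simp add: mult_ac)
      qed simp
    qed
    also have "\<dots> = ennreal w0 * emeasure GM (B - A)"
      unfolding GM_eq[of "B - A", OF sets.Diff[OF B A]] by (rule nn_integral_cmult) auto
    finally show ?thesis .
  qed
  have meas_cmp: "emeasure GM (B - A) \<le> emeasure GM (A - B)"
  proof -
    have "emeasure GM (A \<inter> B) + emeasure GM (B - A) = emeasure GM B"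
    proof -
      have "A \<inter> B \<union> (B - A) = B" "A \<inter> B \<inter> (B - A) = {}" by auto
      then show ?thesis using plus_emeasure[of "A \<inter> B" GM "B - A"] by simp
    qed
    also have "\<dots> \<le> emeasure GM A"
      using le unfolding B_def emeasure_GM_eq by (rule ennreal_leI)
    also have "\<dots> = emeasure GM (A \<inter> B) + emeasure GM (A - B)"
    proof -
      have "A \<inter> B \<union> (A - B) = A" "A \<inter> B \<inter> (A - B) = {}" by auto
      then show ?thesis using plus_emeasure[of "A \<inter> B" GM "A - B"] by simp
    qed
    finally show ?thesis
      by (subst (asm) ennreal_add_left_cancel_le) (auto simp: emeasure_GM_eq)
  qed
  have "F B = F (B \<inter> A) + F (B - A)" by (rule F_split) auto
  also have "\<dots> \<le> F (B \<inter> A) + ennreal w0 * emeasure GM (B - A)"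
    using F_le by (rule add_left_mono)
  also have "\<dots> \<le> F (A \<inter> B) + ennreal w0 * emeasure GM (A - B)"
    using meas_cmp by (auto simp: Int_commute intro!: add_left_mono mult_left_mono)
  also have "\<dots> \<le> F (A \<inter> B) + F (A - B)"
    using F_ge by (rule add_left_mono)
  also have "\<dots> = F A" by (rule F_split[symmetric]) auto
  finally have "F B \<le> F A" .
  then have "emeasure GM ((\<lambda>x. t *\<^sub>R x) ` B) \<le> emeasure GM ((\<lambda>x. t *\<^sub>R x) ` A)"
    using F_eq[OF B] F_eq[OF A] by simp
  then show ?thesis
    unfolding B_def scale_cball[OF t(1)] emeasure_GM_eq using gauss_nonneg[of "cball (0::real^'n) (t*r)"] gauss_nonneg[of "(\<lambda>x. t *\<^sub>R x) ` A"]
    by (subst (asm) ennreal_le_iff2) auto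
qed



definition gmax :: "'n itself \<Rightarrow> real" where "gmax _ = (2 * pi) powr (- real CARD('n) / 2)"

lemma gauss_dens_le: "gauss_dens (x::real^'n) \<le> gmax TYPE('n)"
  by (simp add: gauss_dens_def gmax_def)

lemma gmax_pos: "gmax N > 0" by (simp add: gmax_def)

lemma gauss_dens_ge: "norm (x::real^'n) \<le> R \<Longrightarrow> gmax TYPE('n) * exp (- R\<^sup>2 / 2) \<le> gauss_dens x"
proof -
  assume "norm (x::real^'n) \<le> R"
  then have "(norm x)\<^sup>2 \<le> R\<^sup>2" by (intro power_mono) auto
  then show ?thesis unfolding gauss_dens_def gmax_def by (intro mult_left_mono) auto
qed

lemma GM_upper:
  assumes S: "S \<in> sets lebesgue"
  shows "emeasure (GM :: (real^'n) measure) S \<le> ennreal (gmax TYPE('n)) * emeasure lebesgue S"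
proof -
  have "emeasure (GM :: (real^'n) measure) S = (\<integral>\<^sup>+x. ennreal (gauss_dens x) * indicator S x \<partial>lebesgue)"
    using S by (subst emeasure_density) auto
  also have "\<dots> \<le> (\<integral>\<^sup>+x. ennreal (gmax TYPE('n)) * indicator S x \<partial>lebesgue)"
    by (intro nn_integral_mono mult_right_mono ennreal_leI gauss_dens_le) auto
  also have "\<dots> = ennreal (gmax TYPE('n)) * emeasure lebesgue S"
    using S by (rule nn_integral_cmult_indicator)
  finally show ?thesis .
qed

lemma GM_lower:
  assumes S: "S \<in> sets lebesgue" and SR: "S \<subseteq> cball 0 R"
  shows "ennreal (gmax TYPE('n) * exp (- R\<^sup>2 / 2)) * emeasure lebesgue S \<le> emeasure (GM :: (real^'n) measure) S"
proof -
  have "ennreal (gmax TYPE('n) * exp (- R\<^sup>2 / 2)) * emeasure lebesgue S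
      = (\<integral>\<^sup>+x. ennreal (gmax TYPE('n) * exp (- R\<^sup>2 / 2)) * indicator S x \<partial>lebesgue)"
    using S by (rule nn_integral_cmult_indicator[symmetric])
  also have "\<dots> \<le> (\<integral>\<^sup>+x. ennreal (gauss_dens (x::real^'n)) * indicator S x \<partial>lebesgue)"
  proof (intro nn_integral_mono)
    fix x :: "real^'n"
    show "ennreal (gmax TYPE('n) * exp (- R\<^sup>2 / 2)) * indicator S x \<le> ennreal (gauss_dens x) * indicator S x"
      using SR gauss_dens_ge[of x R] by (cases "x \<in> S") (auto intro!: ennreal_leI)
  qed
  also have "\<dots> = emeasure (GM :: (real^'n) measure) S"
    using S by (subst emeasure_density) auto
  finally show ?thesis .
qed

lemma Psi_eq: "Psi (N::'n::finite itself) r = gauss (cball (0::real^'n) r)"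
  by (simp add: Psi_def)

lemma Psi_mono: "r \<le> r' \<Longrightarrow> Psi (N::'n::finite itself) r \<le> Psi N r'"
  unfolding Psi_eq by (rule gauss_mono) auto

lemma Psi_0: "Psi (N::'n::finite itself) 0 = 0"
  unfolding Psi_eq using negligible_sing[of "0::real^'n"]
  by (intro gauss_null) (simp add: negligible_iff_null_sets)

lemma Psi_nonneg: "Psi N r \<ge> 0"
  by (simp add: Psi_eq gauss_nonneg)

lemma Psi_le1: "Psi N r \<le> 1"
  by (simp add: Psi_eq gauss_le1)

lemma gauss_Diff:
  assumes "A \<in> sets lebesgue" "B \<in> sets lebesgue" "B \<subseteq> A"
  shows "gauss ((A::(real^'n) set) - B) = gauss A - gauss B"
proof -
  interpret prob_space "GM :: (real^'n) measure" by (rule GM_prob)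
  show ?thesis using finite_measure_Diff[of A B] assms by (simp add: gauss_def)
qed

lemma Psi_strict:
  assumes r: "0 \<le> r" "r < r'"
  shows "Psi (N::'n::finite itself) r < Psi N r'"
proof -
  obtain b :: "real^'n" where b: "b \<in> Basis" using nonempty_Basis by blast
  define p where "p = ((r + r') / 2) *\<^sub>R b"
  define \<delta> where "\<delta> = (r' - r) / 2"
  have \<delta>: "\<delta> > 0" using r by (simp add: \<delta>_def)
  have np: "norm p = (r + r') / 2" using r b by (simp add: p_def)
  have sub: "ball p \<delta> \<subseteq> cball 0 r' - cball 0 r"
  proof
    fix x assume "x \<in> ball p \<delta>"
    then have d: "norm (x - p) < \<delta>" by (simp add: dist_norm norm_minus_commute)
    have "norm x \<le> norm p + norm (x - p)" by (rule norm_triangle_sub)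
    moreover have "norm p \<le> norm x + norm (p - x)" by (rule norm_triangle_sub)
    moreover have "norm (p - x) = norm (x - p)" by (rule norm_minus_commute)
    moreover have "2 * norm (x - p) < r' - r" using d unfolding \<delta>_def by simp
    moreover have "2 * norm p = r + r'" using np by simp
    ultimately have "norm x \<le> r'" "\<not> norm x \<le> r" by linarith+
    then show "x \<in> cball 0 r' - cball 0 r" by simp
  qed
  have S: "ball p \<delta> \<in> sets lebesgue" by simp
  have nn: "\<not> negligible (ball p \<delta>)" using \<delta> by (intro open_not_negligible) auto
  have "emeasure lebesgue (ball p \<delta>) \<noteq> 0"
  proof
    assume "emeasure lebesgue (ball p \<delta>) = 0"
    then have "ball p \<delta> \<in> null_sets lebesgue" using S by (simp add: null_sets_def)
    then show False using nn by (simp add: negligible_iff_null_sets)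
  qed
  moreover have "ennreal (gmax TYPE('n) * exp (- r'\<^sup>2 / 2)) \<noteq> 0" using gmax_pos[of "TYPE('n)"] by simp
  ultimately have "0 < ennreal (gmax TYPE('n) * exp (- r'\<^sup>2 / 2)) * emeasure lebesgue (ball p \<delta>)"
    by (simp add: zero_less_iff_neq_zero)
  also have "\<dots> \<le> emeasure GM (ball p \<delta>)"
    using sub by (intro GM_lower S) auto
  finally have "0 < gauss (ball p \<delta>)" by (simp add: emeasure_GM_eq)
  also have "\<dots> \<le> gauss (cball (0::real^'n) r' - cball 0 r)"
    using sub by (intro gauss_mono) auto
  also have "\<dots> = gauss (cball (0::real^'n) r') - gauss (cball (0::real^'n) r)"
    using gauss_Diff[of "cball (0::real^'n) r'" "cball 0 r"] r subset_cball[of r r' "0::real^'n"] by simp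
  finally show ?thesis unfolding Psi_eq by simp
qed


lemma leb_cball: "r \<ge> 0 \<Longrightarrow> measure lebesgue (cball (0::real^'n) r) = unit_ball_vol (real CARD('n)) * r ^ CARD('n)"
  using content_cball[of r "0::real^'n"] by simp

lemma Psi_diff_le:
  assumes r: "0 \<le> r" "r \<le> r'"
  shows "Psi (N::'n::finite itself) r' - Psi N r \<le> gmax TYPE('n) * (unit_ball_vol (real CARD('n)) * r' ^ CARD('n) - unit_ball_vol (real CARD('n)) * r ^ CARD('n))"
proof -
  let ?D = "cball (0::real^'n) r' - cball 0 r"
  have sub: "cball (0::real^'n) r \<subseteq> cball 0 r'" using r by auto
  have fin: "emeasure lebesgue (cball (0::real^'n) r') \<noteq> \<infinity>"
    using emeasure_lborel_cball_finite[of "0::real^'n" r'] by simp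
  have mD: "measure lebesgue ?D = measure lebesgue (cball (0::real^'n) r') - measure lebesgue (cball (0::real^'n) r)"
    using sub fin by (intro measure_Diff) auto
  have finD: "emeasure lebesgue ?D \<noteq> \<infinity>"
    using fin emeasure_mono[of ?D "cball 0 r'" lebesgue] by (auto simp: top_unique)
  have "ennreal (gauss ?D) \<le> ennreal (gmax TYPE('n)) * emeasure lebesgue ?D"
    using GM_upper[of ?D] by (simp add: emeasure_GM_eq)
  also have "\<dots> = ennreal (gmax TYPE('n) * measure lebesgue ?D)"
    using finD gmax_pos[of "TYPE('n)"] by (simp add: emeasure_eq_ennreal_measure ennreal_mult)
  finally have "gauss ?D \<le> gmax TYPE('n) * measure lebesgue ?D"
    using gmax_pos[of "TYPE('n)"] by (subst (asm) ennreal_le_iff) auto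
  moreover have "gauss ?D = Psi N r' - Psi N r"
    unfolding Psi_eq using gauss_Diff[of "cball (0::real^'n) r'" "cball 0 r"] sub by simp
  moreover have "measure lebesgue (cball (0::real^'n) r) = unit_ball_vol (real CARD('n)) * r ^ CARD('n)"
    using r by (intro leb_cball) auto
  moreover have "measure lebesgue (cball (0::real^'n) r') = unit_ball_vol (real CARD('n)) * r' ^ CARD('n)"
    using r by (intro leb_cball) auto
  ultimately show ?thesis using mD by simp
qed

lemma cont_compare:
  fixes f g :: "real \<Rightarrow> real"
  assumes g: "continuous_on S g" and le: "\<And>x y. x \<in> S \<Longrightarrow> y \<in> S \<Longrightarrow> \<bar>f y - f x\<bar> \<le> \<bar>g y - g x\<bar>"
  shows "continuous_on S f"
  unfolding continuous_on_def
proof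
  fix x assume x: "x \<in> S"
  have "(g \<longlongrightarrow> g x) (at x within S)" using g x by (simp add: continuous_on_def)
  then have "((\<lambda>y. g y - g x) \<longlongrightarrow> 0) (at x within S)" by (simp add: LIM_zero_iff)
  then have lim: "((\<lambda>y. \<bar>g y - g x\<bar>) \<longlongrightarrow> 0) (at x within S)" using tendsto_rabs by force
  have ev: "eventually (\<lambda>y. norm (f y - f x) \<le> \<bar>g y - g x\<bar>) (at x within S)"
    using le x by (auto simp: eventually_at_filter)
  have "((\<lambda>y. f y - f x) \<longlongrightarrow> 0) (at x within S)"
    by (rule Lim_null_comparison[OF ev lim])
  then show "(f \<longlongrightarrow> f x) (at x within S)" by (simp add: LIM_zero_iff)
qed

lemma Psi_cont: "continuous_on {0..} (Psi (N::'n::finite itself))"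
proof (rule cont_compare)
  let ?g = "\<lambda>r. gmax TYPE('n) * (unit_ball_vol (real CARD('n)) * r ^ CARD('n))"
  show "continuous_on {0..} ?g" by (intro continuous_intros)
  have gm: "?g x \<le> ?g y" if "0 \<le> x" "x \<le> y" for x y
    using that gmax_pos[of "TYPE('n)"] by (intro mult_left_mono power_mono) auto
  fix x y :: real assume "x \<in> {0..}" "y \<in> {0..}"
  then have xy: "0 \<le> x" "0 \<le> y" by auto
  show "\<bar>Psi N y - Psi N x\<bar> \<le> \<bar>?g y - ?g x\<bar>"
  proof (cases "x \<le> y")
    case True
    then show ?thesis using Psi_diff_le[of x y N] Psi_mono[of x y N] gm[of x y] xy
      by (simp add: algebra_simps)
  next
    case False
    then show ?thesis using Psi_diff_le[of y x N] Psi_mono[of y x N] gm[of y x] xy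
      by (simp add: algebra_simps)
  qed
qed

lemma Psi_lim:
  assumes a: "a < 1"
  shows "\<exists>r\<ge>0. a < Psi (N::'n::finite itself) r"
proof (rule ccontr)
  assume "\<not> ?thesis"
  then have le: "Psi N (real n) \<le> a" for n by (meson not_le of_nat_0_le_iff)
  have inc: "incseq (\<lambda>n. cball (0::real^'n) (real n))"
    by (auto simp: incseq_def)
  have U: "(\<Union>n. cball (0::real^'n) (real n)) = UNIV"
  proof -
    have "x \<in> (\<Union>n. cball (0::real^'n) (real n))" for x
    proof -
      obtain n where "norm x \<le> real n" using real_arch_simple by blast
      then show ?thesis by auto
    qed
    then show ?thesis by auto
  qed
  have "(SUP n. emeasure (GM :: (real^'n) measure) (cball 0 (real n))) = emeasure GM (\<Union>n. cball (0::real^'n) (real n))"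
    using inc by (intro SUP_emeasure_incseq) auto
  also have "\<dots> = 1" using U GM_UNIV by simp
  moreover have "(SUP n. emeasure (GM :: (real^'n) measure) (cball 0 (real n))) \<le> ennreal a"
  proof (rule SUP_least)
    fix n
    show "emeasure (GM :: (real^'n) measure) (cball 0 (real n)) \<le> ennreal a"
      using le[of n] unfolding emeasure_GM_eq Psi_eq by (rule ennreal_leI)
  qed
  ultimately have "1 \<le> ennreal a" by simp
  then show False using a by (cases "a \<ge> 0") (auto simp: ennreal_le_1 ennreal_neg)
qed

lemma Psi_le_imp:
  assumes "0 \<le> r'" "Psi N r \<le> Psi (N::'n::finite itself) r'"
  shows "r \<le> r'"
proof (rule ccontr)
  assume "\<not> r \<le> r'"
  then have "Psi N r' < Psi N r" using Psi_strict[of r' r N] assms(1) by simp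
  then show False using assms(2) by simp
qed

lemma Psi_inv_char:
  assumes a: "0 \<le> a" "a < 1"
  shows "\<exists>R\<ge>0. Psi (N::'n::finite itself) R = a \<and> Psi_inv N a = ereal R"
proof -
  obtain r where r: "r \<ge> 0" "a < Psi N r" using Psi_lim[OF a(2)] by blast
  have c: "continuous_on {0..r} (Psi N)" using Psi_cont by (rule continuous_on_subset) auto
  have "\<exists>x. 0 \<le> x \<and> x \<le> r \<and> Psi N x = a"
    by (rule IVT'[OF _ _ _ c]) (use a r Psi_0[of N] in auto)
  then obtain R where R: "0 \<le> R" "Psi N R = a" by blast
  have uniq: "y = R" if "y \<ge> 0 \<and> Psi N y = a" for y
  proof -
    have "y \<le> R" using that R by (intro Psi_le_imp[of R N y]) auto
    moreover have "R \<le> y" using that R by (intro Psi_le_imp[of y N R]) auto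
    ultimately show ?thesis by simp
  qed
  have "(THE y. y \<ge> 0 \<and> Psi N y = a) = R"
    by (rule the_equality) (use R uniq in blast)+
  then have "Psi_inv N a = ereal R" using a(2) unfolding Psi_inv_def by simp
  then show ?thesis using R by blast
qed

lemma Psi_inv_ge1: "t \<ge> 1 \<Longrightarrow> Psi_inv N t = \<infinity>"
  by (simp add: Psi_inv_def)



lemma sym_zero:
  assumes "symmetric_set K" "convex K" "K \<noteq> {}"
  shows "(0::real^'n) \<in> K"
proof -
  obtain x where x: "x \<in> K" using assms(3) by blast
  have "-x \<in> K" using x assms(1) unfolding symmetric_set_def by (metis image_eqI)
  then have "(1/2) *\<^sub>R x + (1/2) *\<^sub>R (-x) \<in> K"
    using convexD[OF assms(2) x \<open>-x \<in> K\<close>, of "1/2" "1/2"] by simp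
  then show ?thesis by simp
qed

lemma mink_convex:
  assumes "convex K" "convex L"
  shows "convex (minkowski_comb lam K L)"
proof -
  have "minkowski_comb lam K L = (\<Union>x\<in> (\<lambda>x. lam *\<^sub>R x) ` K. \<Union>y \<in> (\<lambda>x. (1 - lam) *\<^sub>R x) ` L. {x + y})"
    unfolding minkowski_comb_def by auto
  then show ?thesis
    using convex_sums[OF convex_scaling[OF assms(1), of lam] convex_scaling[OF assms(2), of "1-lam"]] by simp
qed

lemma convex_leb:
  assumes "convex (M::(real^'n) set)"
  shows "M \<in> sets lebesgue" "gauss (closure M) = gauss M"
proof -
  have "closure M - M \<subseteq> frontier M" unfolding frontier_def using interior_subset by blast
  then have N: "closure M - M \<in> null_sets lebesgue"
    using negligible_convex_frontier[OF assms] negligible_subset negligible_iff_null_sets by blast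
  have C: "closure M \<in> sets lebesgue" by simp
  have "M = closure M - (closure M - M)" using closure_subset by blast
  then show M: "M \<in> sets lebesgue" using C N by (metis sets.Diff null_setsD2)
  have "closure M = M \<union> (closure M - M)" using closure_subset by blast
  then have "gauss (closure M) = measure GM (M \<union> (closure M - M))" by (simp add: gauss_def)
  also have "\<dots> = measure GM M" using M GM_null[OF N] by (intro measure_Un_null_set) auto
  finally show "gauss (closure M) = gauss M" by (simp add: gauss_def)
qed

lemma amgm:
  fixes lam p u v :: real
  assumes "0 < lam" "lam < 1" "0 < p" "p < 1" "0 \<le> u" "0 \<le> v"
  shows "(lam/p) powr p * ((1-lam)/(1-p)) powr (1-p) * (u powr p * v powr (1-p)) \<le> lam*u + (1-lam) * v"
proof (cases "u = 0 \<or> v = 0")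
  case True
  then show ?thesis using assms by auto
next
  case False
  then have uv: "u > 0" "v > 0" using assms by auto
  have "(lam/p) powr p * ((1-lam)/(1-p)) powr (1-p) * (u powr p * v powr (1-p))
      = (lam/p*u) powr p * ((1-lam)/(1-p) * v) powr (1-p)"
  proof -
    have "(lam/p*u) powr p = (lam/p) powr p * u powr p" using assms uv powr_mult[of "lam/p" u p] by simp
    moreover have "((1-lam)/(1-p) * v) powr (1-p) = ((1-lam)/(1-p)) powr (1-p) * v powr (1-p)"
      using assms uv powr_mult[of "(1-lam)/(1-p)" v "1-p"] by simp
    ultimately show ?thesis by (simp only: mult_ac)
  qed
  also have "\<dots> \<le> p * (lam/p*u) + (1-p) * ((1-lam)/(1-p) * v)"
    using assms uv by (intro Youngs_inequality_0) auto
  also have "\<dots> = lam*u + (1-lam) * v" using assms by (simp add: field_simps)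
  finally show ?thesis .
qed

lemma cp_bounds:
  fixes lam p :: real
  assumes "0 < lam" "lam < 1" "0 < p" "p < 1"
  shows "0 < (lam/p) powr p * ((1-lam)/(1-p)) powr (1-p)" "(lam/p) powr p * ((1-lam)/(1-p)) powr (1-p) \<le> 1"
proof -
  show "0 < (lam/p) powr p * ((1-lam)/(1-p)) powr (1-p)" using assms by simp
  have "(lam/p) powr p * ((1-lam)/(1-p)) powr (1-p) \<le> p * (lam/p) + (1-p) * ((1-lam)/(1-p))"
    using assms by (intro Youngs_inequality_0) auto
  also have "\<dots> = 1" using assms by (simp add: field_simps)
  finally show "(lam/p) powr p * ((1-lam)/(1-p)) powr (1-p) \<le> 1" .
qed


lemma closed_ereal_le: "closed {x::real^'n. ereal (x \<bullet> \<theta>) \<le> e}"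
proof (cases e)
  case (real r)
  have "{x::real^'n. ereal (x \<bullet> \<theta>) \<le> e} = {x. \<theta> \<bullet> x \<le> r}" using real by (auto simp: inner_commute)
  then show ?thesis using closed_halfspace_le[of \<theta> r] by simp
next
  case PInf
  then show ?thesis by simp
next
  case MInf
  then show ?thesis by simp
qed

lemma geom_closed: "closed (geom_mean (K::(real^'n) set) L p)"
  unfolding geom_mean_def by (intro closed_INT ballI closed_ereal_le)

lemma supp_real:
  assumes "(0::real^'n) \<in> K" "\<And>k. k \<in> K \<Longrightarrow> k \<bullet> \<theta> \<le> B"
  shows "\<exists>h. supp_fun K \<theta> = ereal h \<and> 0 \<le> h \<and> h \<le> B"
proof -
  have up: "supp_fun K \<theta> \<le> ereal B" unfolding supp_fun_def using assms(2) by (intro SUP_least) auto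
  have lo: "ereal 0 \<le> supp_fun K \<theta>" unfolding supp_fun_def using SUP_upper[OF assms(1), of "\<lambda>y. ereal (y \<bullet> \<theta>)"] by simp
  obtain h where h: "supp_fun K \<theta> = ereal h" using up lo by (cases "supp_fun K \<theta>") auto
  then show ?thesis using up lo by auto
qed

lemma contain:
  assumes K: "symmetric_set K" "convex K" "K \<noteq> {}" and L: "symmetric_set L" "convex L" "L \<noteq> {}"
    and lam: "0 < lam" "lam < 1" and p: "0 < p" "p < 1"
  shows "(\<lambda>x. ((lam/p) powr p * ((1-lam)/(1-p)) powr (1-p)) *\<^sub>R x) ` geom_mean K L p \<subseteq> closure (minkowski_comb lam K (L::(real^'n) set))"
proof
  define c where "c = (lam/p) powr p * ((1-lam)/(1-p)) powr (1-p)"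
  define M where "M = minkowski_comb lam K L"
  have c0: "0 < c" unfolding c_def using cp_bounds[OF lam p] by simp
  fix y assume "y \<in> (\<lambda>x. ((lam/p) powr p * ((1-lam)/(1-p)) powr (1-p)) *\<^sub>R x) ` geom_mean K L p"
  then obtain x where x: "x \<in> geom_mean K L p" and y: "y = c *\<^sub>R x" unfolding c_def by auto
  show "y \<in> closure (minkowski_comb lam K L)"
  proof (rule ccontr)
    assume ny: "y \<notin> closure (minkowski_comb lam K L)"
    obtain a b where ab: "a \<bullet> y < b" "\<forall>z\<in>closure M. a \<bullet> z > b"
      using separating_hyperplane_closed_point[OF convex_closure[OF mink_convex[OF K(2) L(2)]] closed_closure ny]
      unfolding M_def by blast
    have zK: "0 \<in> K" using sym_zero K by blast
    have zL: "0 \<in> L" using sym_zero L by blast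
    have inM: "lam *\<^sub>R k + (1 - lam) *\<^sub>R l \<in> M" if "k \<in> K" "l \<in> L" for k l
      unfolding M_def minkowski_comb_def using that by blast
    have "0 \<in> M" using inM[OF zK zL] by simp
    then have "b < 0" using ab(2) closure_subset by fastforce
    then have an: "a \<noteq> 0" using ab(1) by auto
    then have na: "norm a > 0" by simp
    define \<theta> where "\<theta> = - (1 / norm a) *\<^sub>R a"
    define \<beta> where "\<beta> = - b / norm a"
    have \<theta>s: "\<theta> \<in> sphere 0 1" using an by (simp add: \<theta>_def)
    have th_eq: "\<theta> \<bullet> z = - (a \<bullet> z) / norm a" for z unfolding \<theta>_def by simp
    have Mth: "\<theta> \<bullet> z < \<beta>" if "z \<in> M" for z
    proof -
      have "a \<bullet> z > b" using ab(2) that closure_subset by blast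
      then show ?thesis unfolding th_eq \<beta>_def using na by (simp add: divide_strict_right_mono)
    qed
    have yth: "\<beta> < \<theta> \<bullet> y" unfolding th_eq \<beta>_def using ab(1) na by (simp add: divide_strict_right_mono)
    have KL: "lam * (k \<bullet> \<theta>) + (1 - lam) * (l \<bullet> \<theta>) < \<beta>" if "k \<in> K" "l \<in> L" for k l
      using Mth[OF inM[OF that]] by (simp add: inner_add_right inner_commute)
    have kb: "k \<bullet> \<theta> \<le> (\<beta> - (1 - lam) * (l \<bullet> \<theta>)) / lam" if "k \<in> K" "l \<in> L" for k l
      using KL[OF that] lam by (simp add: le_divide_eq algebra_simps)
    obtain hk where hk: "supp_fun K \<theta> = ereal hk" "0 \<le> hk" "hk \<le> \<beta> / lam"
      using supp_real[OF zK, of \<theta> "\<beta> / lam"] kb[OF _ zL] by auto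
    have lb: "l \<bullet> \<theta> \<le> (\<beta> - lam * hk) / (1 - lam)" if l: "l \<in> L" for l
    proof -
      have "supp_fun K \<theta> \<le> ereal ((\<beta> - (1 - lam) * (l \<bullet> \<theta>)) / lam)"
        unfolding supp_fun_def using kb[OF _ l] by (intro SUP_least) auto
      then have "hk \<le> (\<beta> - (1 - lam) * (l \<bullet> \<theta>)) / lam" using hk(1) by simp
      then have "lam * hk \<le> \<beta> - (1 - lam) * (l \<bullet> \<theta>)" using lam by (simp add: le_divide_eq mult.commute)
      then show ?thesis using lam by (simp add: le_divide_eq algebra_simps)
    qed
    obtain hl where hl: "supp_fun L \<theta> = ereal hl" "0 \<le> hl" "hl \<le> (\<beta> - lam * hk) / (1 - lam)"
      using supp_real[OF zL, of \<theta> "(\<beta> - lam * hk) / (1 - lam)"] lb by auto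
    have sum_le: "lam * hk + (1 - lam) * hl \<le> \<beta>"
      using hl(3) lam by (simp add: le_divide_eq algebra_simps)
    have "ereal (x \<bullet> \<theta>) \<le> epow (supp_fun K \<theta>) p * epow (supp_fun L \<theta>) (1 - p)"
      using x \<theta>s unfolding geom_mean_def by blast
    then have xth: "x \<bullet> \<theta> \<le> hk powr p * hl powr (1 - p)"
      unfolding hk(1) hl(1) epow_def by simp
    have "\<theta> \<bullet> y = c * (x \<bullet> \<theta>)" unfolding y by (simp add: inner_commute)
    also have "\<dots> \<le> c * (hk powr p * hl powr (1 - p))" using xth c0 by (simp add: mult_left_mono)
    also have "\<dots> \<le> lam * hk + (1 - lam) * hl" unfolding c_def using amgm[OF lam p hk(2) hl(2)] by simp
    also have "\<dots> \<le> \<beta>" by (rule sum_le)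
    finally show False using yth by simp
  qed
qed



theorem proposition4p2:
  assumes hyp: "\<forall>(K::(real^'n) set) L lam. symmetric_set K \<and> convex K \<and> symmetric_set L \<and> convex L
      \<and> 0 < lam \<and> lam < 1 \<longrightarrow>
      gauss (geom_mean K L lam) \<ge> gauss K powr lam * gauss L powr (1 - lam)"
    and K: "symmetric_set (K::(real^'n) set)" "convex K"
    and L: "symmetric_set L" "convex L"
    and lam: "0 < lam" "lam < 1"
  shows "Psi_inv TYPE('n) (gauss (minkowski_comb lam K L)) \<ge>
    (SUP p\<in>{0<..<1}. ereal ((lam / p) powr p * ((1 - lam) / (1 - p)) powr (1 - p))
        * Psi_inv TYPE('n) (gauss K powr p * gauss L powr (1 - p)))"
proof -
  define M where "M = minkowski_comb lam K L"
  have Mconv: "convex M" unfolding M_def using K L by (intro mink_convex) auto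
  have Mmeas: "M \<in> sets lebesgue" and Mcl: "gauss (closure M) = gauss M"
    using convex_leb[OF Mconv] by auto
  have Psi_inv_nonneg: "0 \<le> Psi_inv TYPE('n) t" if t0: "0 \<le> t" for t
  proof (cases "t < 1")
    case True
    then obtain R where "R \<ge> 0" "Psi_inv TYPE('n) t = ereal R" using Psi_inv_char[OF t0 True] by blast
    then show ?thesis by simp
  next
    case False
    then show ?thesis by (simp add: Psi_inv_ge1)
  qed
  have main: "ereal ((lam / p) powr p * ((1 - lam) / (1 - p)) powr (1 - p))
        * Psi_inv TYPE('n) (gauss K powr p * gauss L powr (1 - p)) \<le> Psi_inv TYPE('n) (gauss M)"
    if p: "0 < p" "p < 1" for p
  proof -
    define c where "c = (lam / p) powr p * ((1 - lam) / (1 - p)) powr (1 - p)"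
    define a where "a = gauss K powr p * gauss L powr (1 - p)"
    have c: "0 < c" "c \<le> 1" unfolding c_def using cp_bounds[OF lam p] by auto
    have a0: "0 \<le> a" unfolding a_def by simp
    have "ereal c * Psi_inv TYPE('n) a \<le> Psi_inv TYPE('n) (gauss M)"
    proof (cases "a = 0")
      case True
      obtain R where R: "R \<ge> 0" "Psi TYPE('n) R = 0" "Psi_inv TYPE('n) 0 = ereal R"
        using Psi_inv_char[of 0 "TYPE('n)"] by auto
      have "R \<le> 0" using R Psi_le_imp[of 0 "TYPE('n)" R] Psi_0[of "TYPE('n)"] by simp
      then have "Psi_inv TYPE('n) a = 0" using R True by simp
      then show ?thesis using Psi_inv_nonneg[OF gauss_nonneg[of M]] by simp
    next
      case False
      then have aPos: "0 < a" using a0 by simp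
      have gK: "gauss K \<noteq> 0" using False unfolding a_def by auto
      have gL: "gauss L \<noteq> 0" using False unfolding a_def by auto
      have Kne: "K \<noteq> {}" using gK by (auto simp: gauss_def)
      have Lne: "L \<noteq> {}" using gL by (auto simp: gauss_def)
      define G where "G = geom_mean K L p"
      have aG: "a \<le> gauss G" using hyp[rule_format, of K L p] K L p unfolding a_def G_def by simp
      have Gmeas: "G \<in> sets lebesgue" unfolding G_def using geom_closed[of K L p] by simp
      have cG: "(\<lambda>x. c *\<^sub>R x) ` G \<subseteq> closure M"
        unfolding G_def M_def c_def using contain[OF K Kne L Lne lam p] by simp
      have cGM: "gauss ((\<lambda>x. c *\<^sub>R x) ` G) \<le> gauss M"
        using gauss_mono[OF cG] Mcl by simp
      show ?thesis
      proof (cases "gauss M < 1")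
        case False
        then show ?thesis by (simp add: Psi_inv_ge1)
      next
        case True
        obtain R' where R': "R' \<ge> 0" "Psi TYPE('n) R' = gauss M" "Psi_inv TYPE('n) (gauss M) = ereal R'"
          using Psi_inv_char[OF gauss_nonneg True] by blast
        show ?thesis
        proof (cases "a < 1")
          case False
          obtain r0 where r0: "r0 \<ge> 0" "gauss M < Psi TYPE('n) r0" using Psi_lim[OF True] by blast
          have "Psi TYPE('n) (r0 / c) \<le> gauss G" using Psi_le1[of "TYPE('n)" "r0/c"] False aG by simp
          then have "gauss (cball (0::real^'n) (c * (r0 / c))) \<le> gauss ((\<lambda>x. c *\<^sub>R x) ` G)"
            using dilation[OF Gmeas c(1) c(2), of "r0 / c"] r0 c \<open>Psi TYPE('n) (r0 / c) \<le> gauss G\<close>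
            unfolding Psi_eq by simp
          then have "Psi TYPE('n) r0 \<le> gauss M" using c cGM by (simp add: Psi_eq)
          then show ?thesis using r0 by simp
        next
          case True
          obtain R where R: "R \<ge> 0" "Psi TYPE('n) R = a" "Psi_inv TYPE('n) a = ereal R"
            using Psi_inv_char[OF a0 True] by blast
          have "gauss (cball (0::real^'n) (c * R)) \<le> gauss ((\<lambda>x. c *\<^sub>R x) ` G)"
            using dilation[OF Gmeas c(1) c(2), of R] R c aG unfolding Psi_eq by simp
          then have "Psi TYPE('n) (c * R) \<le> Psi TYPE('n) R'" using cGM R' by (simp add: Psi_eq)
          then have "c * R \<le> R'" using Psi_le_imp[of R' "TYPE('n)" "c * R"] R'(1) by blast
          then show ?thesis using R R' by simp
        qed
      qed
    qed
    then show ?thesis unfolding c_def a_def .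
  qed
  show ?thesis unfolding M_def[symmetric]
    by (rule SUP_least) (use main in auto)
qed


end
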